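(* Let $p\ge2$, $m\ge1$, $d\ge1$ be integers, and let $W\in\mathbb{R}^{d\times p}$, $V\in\mathbb{R}^{p\times d}$. If the ReLU network $s^\theta(x)=V\,\mathrm{ReLU}(Wx)$ exactly realizes modular addition on $\mathcal{X}_m$, i.e. $h_\theta(x)=y(x)$ for every $x\in\mathcal{X}_m$, then \[ d\ \ge\ \frac{m-p}{p+2}. \]
   Context: Let $[p]=\{0,1,\dots,p-1\}$ and $\mathcal{X}_m=\{x\in\{0,1,\dots,m\}^p:\ \|x\|_1=m\}$, with coordinates of $x$ indexed by $[p]$. The label of $x$ is $y(x)=(\sum_{r\in[p]} r\,x_r)\bmod p\in[p]$. $\mathrm{ReLU}(t)=\max\{0,t\}$ is applied entrywise. For a score vector $s^\theta(x)\in\mathbb{R}^p$ with coordinates indexed by $[p]$, the predictor is $h_\theta(x)=\ell$ if $s^\theta_\ell(x)>s^\theta_k(x)$ for all $k\ne\ell$, and $h_\theta(x)=\bot$ (invalid, never equal to a label) otherwise. *)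

theory Defs
  imports Complex_Main
begin

text \<open>Inputs: vectors in {0..m}^p indexed by [p] = {0..<p}, represented as
  functions nat => nat that vanish outside [p].\<close>
definition Xset :: "nat \<Rightarrow> nat \<Rightarrow> (nat \<Rightarrow> nat) set" where
  "Xset p m = {x. (\<forall>r. p \<le> r \<longrightarrow> x r = 0) \<and> (\<forall>r<p. x r \<le> m) \<and> (\<Sum>r<p. x r) = m}"

definition label :: "nat \<Rightarrow> (nat \<Rightarrow> nat) \<Rightarrow> nat" where
  "label p x = (\<Sum>r<p. r * x r) mod p"

definition relu :: "real \<Rightarrow> real" where
  "relu t = max 0 t"

text \<open>Score s(x) = V ReLU(W x), with W a d x p matrix and V a p x d matrix
  (entries W j r, V l j).\<close>
definition score :: "nat \<Rightarrow> nat \<Rightarrow> (nat \<Rightarrow> nat \<Rightarrow> real) \<Rightarrow> (nat \<Rightarrow> nat \<Rightarrow> real)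
    \<Rightarrow> (nat \<Rightarrow> nat) \<Rightarrow> nat \<Rightarrow> real" where
  "score p d W V x l = (\<Sum>j<d. V l j * relu (\<Sum>r<p. W j r * real (x r)))"

definition predict :: "nat \<Rightarrow> nat \<Rightarrow> (nat \<Rightarrow> nat \<Rightarrow> real) \<Rightarrow> (nat \<Rightarrow> nat \<Rightarrow> real)
    \<Rightarrow> (nat \<Rightarrow> nat) \<Rightarrow> nat option" where
  "predict p d W V x =
     (if \<exists>l<p. \<forall>k<p. k \<noteq> l \<longrightarrow> score p d W V x l > score p d W V x k
      then Some (THE l. l < p \<and> (\<forall>k<p. k \<noteq> l \<longrightarrow> score p d W V x l > score p d W V x k))
      else None)"

end

theory Submission
  imports Defs
begin

lemma predict_SomeD:
  assumes "predict p d W V x = Some l"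
  shows "l < p \<and> (\<forall>k<p. k \<noteq> l \<longrightarrow> score p d W V x l > score p d W V x k)"
proof -
  let ?P = "\<lambda>l. l < p \<and> (\<forall>k<p. k \<noteq> l \<longrightarrow> score p d W V x l > score p d W V x k)"
  have ex: "\<exists>l. ?P l" using assms unfolding predict_def by (auto split: if_splits)
  have l: "l = (THE l. ?P l)" using assms unfolding predict_def by (auto split: if_splits)
  have "\<exists>!l. ?P l"
  proof -
    from ex obtain l0 where l0: "?P l0" by blast
    { fix l1 assume l1: "?P l1"
      have "l1 = l0"
      proof (rule ccontr)
        assume "l1 \<noteq> l0"
        then have "score p d W V x l1 > score p d W V x l0"
             "score p d W V x l0 > score p d W V x l1" using l0 l1 by auto
        then show False by simp
      qed }
    with l0 show ?thesis by blast
  qed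
  then have "?P (THE l. ?P l)" by (rule theI')
  then show ?thesis using l by simp
qed

lemma aff:
  fixes A b t1 t2 q :: real
  assumes "t1 + q \<le> t2" "q \<ge> 0"
    "(A + b*t1 < 0 \<and> A + b*(t1+q) > 0) \<or> (A + b*t1 > 0 \<and> A + b*(t1+q) < 0)"
    "(A + b*t2 < 0 \<and> A + b*(t2+q) > 0) \<or> (A + b*t2 > 0 \<and> A + b*(t2+q) < 0)"
  shows False
proof (cases "b \<ge> 0")
  case True
  have "b*(t1+q) \<le> b*t2" "b*t2 \<le> b*(t2+q)" "b*t1 \<le> b*(t1+q)"
    using True assms(1,2) by (auto intro!: mult_left_mono)
  then show ?thesis using assms(3,4) by linarith
next
  case False
  then have F: "b \<le> 0" by simp
  have "b*(t1+q) \<ge> b*t2" "b*t2 \<ge> b*(t2+q)" "b*t1 \<ge> b*(t1+q)"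
    using F assms(1,2) by (auto intro!: mult_left_mono_neg)
  then show ?thesis using assms(3,4) by linarith
qed

lemma relu_comb:
  fixes u v :: real and p :: real
  assumes "p \<ge> 1" "(u \<ge> 0 \<and> v \<ge> 0) \<or> (u \<le> 0 \<and> v \<le> 0)"
  shows "p * relu (((p-1)*u + v)/p) = (p-1) * relu u + relu v"
proof -
  have pp: "p > 0" using assms by simp
  show ?thesis
  proof (cases "u \<ge> 0 \<and> v \<ge> 0")
    case True
    then have "((p-1)*u + v)/p \<ge> 0" using assms by (simp add: pp)
    then show ?thesis using True pp by (simp add: relu_def)
  next
    case False
    then have uv: "u \<le> 0" "v \<le> 0" using assms by auto
    then have "(p-1)*u \<le> 0" using assms by (simp add: mult_nonneg_nonpos)
    then have "((p-1)*u + v)/p \<le> 0" using uv pp by (simp add: divide_nonpos_pos)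
    then show ?thesis using uv assms by (simp add: relu_def mult_nonneg_nonpos)
  qed
qed

theorem mainTheorem3:
  fixes p m d :: nat and W V :: "nat \<Rightarrow> nat \<Rightarrow> real"
  assumes "p \<ge> 2" and "m \<ge> 1" and "d \<ge> 1"
    and "\<forall>x\<in>Xset p m. predict p d W V x = Some (label p x)"
  shows "real d \<ge> (real m - real p) / (real p + 2)"
proof -
  define xt where "xt t = (\<lambda>r::nat. if r = 0 then m - t else if r = 1 then t else (0::nat))" for t
  have sum01: "(\<Sum>r<p. g r) = g 0 + g 1" if "\<And>r. r \<ge> 2 \<Longrightarrow> g r = 0" for g :: "nat \<Rightarrow> 'a::comm_monoid_add"
  proof -
    have "(\<Sum>r<p. g r) = (\<Sum>r\<in>{0,1}. g r)"
      by (rule sum.mono_neutral_right) (use assms(1) that in auto)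
    then show ?thesis by simp
  qed
  have inX: "xt t \<in> Xset p m" if "t \<le> m" for t
  proof -
    have "(\<Sum>r<p. xt t r) = xt t 0 + xt t 1" by (rule sum01) (simp add: xt_def)
    then show ?thesis using that assms(1) unfolding Xset_def xt_def by auto
  qed
  have lab: "label p (xt t) = t mod p" for t
  proof -
    have "(\<Sum>r<p. r * xt t r) = 0 * xt t 0 + 1 * xt t 1" by (rule sum01) (simp add: xt_def)
    then show ?thesis unfolding label_def by (simp add: xt_def)
  qed
  define pre where "pre j t = W j 0 * real m + (W j 1 - W j 0) * t" for j and t :: real
  have prex: "(\<Sum>r<p. W j r * real (xt t r)) = pre j (real t)" if "t \<le> m" for j t
  proof -
    have "(\<Sum>r<p. W j r * real (xt t r)) = W j 0 * real (xt t 0) + W j 1 * real (xt t 1)"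
      by (rule sum01) (simp add: xt_def)
    then show ?thesis using that by (simp add: xt_def pre_def of_nat_diff algebra_simps)
  qed
  define sc where "sc t l = score p d W V (xt t) l" for t l
  have sc_eq: "sc t l = (\<Sum>j<d. V l j * relu (pre j (real t)))" if "t \<le> m" for t l
    unfolding sc_def score_def using prex[OF that] by simp
  have strict: "sc t (t mod p) > sc t k" if "t \<le> m" "k < p" "k \<noteq> t mod p" for t k
    using predict_SomeD[of p d W V "xt t" "t mod p"] assms(4) inX[OF that(1)] lab that by (auto simp: sc_def)
  have change: "\<exists>j<d. (pre j (real t) < 0 \<and> pre j (real t + real p) > 0) \<or>
       (pre j (real t) > 0 \<and> pre j (real t + real p) < 0)" if "t + p \<le> m" for t
  proof (rule ccontr)
    assume "\<not> ?thesis"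
    then have same: "\<And>j. j < d \<Longrightarrow> (pre j (real t) \<ge> 0 \<and> pre j (real t + real p) \<ge> 0) \<or>
       (pre j (real t) \<le> 0 \<and> pre j (real t + real p) \<le> 0)" by force
    have p1: "real p \<ge> 1" using assms(1) by simp
    have comb: "real p * sc (t+1) l = (real p - 1) * sc t l + sc (t+p) l" for l
    proof -
      have "real p * sc (t+1) l = (\<Sum>j<d. V l j * (real p * relu (pre j (real (t+1)))))"
        using that assms(1) by (simp add: sc_eq sum_distrib_left algebra_simps)
      also have "\<dots> = (\<Sum>j<d. V l j * ((real p - 1) * relu (pre j (real t)) + relu (pre j (real t + real p))))"
      proof (rule sum.cong[OF refl])
        fix j assume "j \<in> {..<d}"
        then have s: "(pre j (real t) \<ge> 0 \<and> pre j (real t + real p) \<ge> 0) \<or>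
           (pre j (real t) \<le> 0 \<and> pre j (real t + real p) \<le> 0)" using same by simp
        have "pre j (real (t+1)) = ((real p - 1) * pre j (real t) + pre j (real t + real p)) / real p"
          using p1 by (simp add: pre_def field_simps)
        then show "V l j * (real p * relu (pre j (real (t+1)))) =
           V l j * ((real p - 1) * relu (pre j (real t)) + relu (pre j (real t + real p)))"
          using relu_comb[OF p1 s] by simp
      qed
      also have "\<dots> = (real p - 1) * sc t l + sc (t+p) l"
        using that by (simp add: sc_eq sum_distrib_left sum.distrib[symmetric] algebra_simps sum_subtractf[symmetric])
      finally show ?thesis .
    qed
    define l where "l = t mod p"
    define l' where "l' = (t+1) mod p"
    have lp: "l < p" "l' < p" using assms(1) by (auto simp: l_def l'_def)
    have ne: "l' \<noteq> l" using assms(1) unfolding l_def l'_def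
      by (auto simp: mod_Suc)
    have lpp: "(t+p) mod p = l" by (simp add: l_def)
    have a: "sc t l > sc t l'" using strict[of t l'] that lp ne by (simp add: l_def)
    have b: "sc (t+p) l > sc (t+p) l'" using strict[of "t+p" l'] that lp ne lpp by simp
    have c: "sc (t+1) l' > sc (t+1) l" using strict[of "t+1" l] that lp ne assms(1) by (simp add: l'_def)
    have "(real p - 1) * sc t l \<ge> (real p - 1) * sc t l'" using a p1 by (intro mult_left_mono) auto
    then have "real p * sc (t+1) l > real p * sc (t+1) l'" using comb b by simp
    moreover have "real p * sc (t+1) l' > real p * sc (t+1) l" using c p1 by simp
    ultimately show False by simp
  qed
  define K where "K = m div p"
  have "\<forall>i\<in>{..<K}. \<exists>j<d. (pre j (real (i*p)) < 0 \<and> pre j (real (i*p) + real p) > 0) \<or>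
       (pre j (real (i*p)) > 0 \<and> pre j (real (i*p) + real p) < 0)"
  proof
    fix i assume "i \<in> {..<K}"
    then have "i + 1 \<le> K" by simp
    then have "(i+1)*p \<le> K*p" by (rule mult_right_mono) simp
    also have "K*p \<le> m" by (simp add: K_def)
    finally show "\<exists>j<d. (pre j (real (i*p)) < 0 \<and> pre j (real (i*p) + real p) > 0) \<or>
       (pre j (real (i*p)) > 0 \<and> pre j (real (i*p) + real p) < 0)" using change[of "i*p"] by (simp add: algebra_simps)
  qed
  then obtain J where J: "\<And>i. i < K \<Longrightarrow> J i < d \<and> ((pre (J i) (real (i*p)) < 0 \<and> pre (J i) (real (i*p) + real p) > 0) \<or>
       (pre (J i) (real (i*p)) > 0 \<and> pre (J i) (real (i*p) + real p) < 0))"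
    by (metis lessThan_iff)
  have inj: "inj_on J {..<K}"
  proof (rule inj_onI, rule ccontr)
    fix i i' assume ii: "i \<in> {..<K}" "i' \<in> {..<K}" "J i = J i'" "i \<noteq> i'"
    have gen: "False" if "a < b" "a < K" "b < K" "J a = J b" for a b
    proof -
      have "a + 1 \<le> b" using that by simp
      then have "real a * real p + real p \<le> real b * real p"
      proof -
        have "(a+1)*p \<le> b*p" using \<open>a+1 \<le> b\<close> by (rule mult_right_mono) simp
        then have "real ((a+1)*p) \<le> real (b*p)" by (simp only: of_nat_le_iff)
        then show ?thesis by (simp add: algebra_simps)
      qed
      then show False
        using aff[of "real (a*p)" "real p" "real (b*p)" "W (J a) 0 * real m" "W (J a) 1 - W (J a) 0"]
          J[OF that(2)] J[OF that(3)] that(4) by (simp add: pre_def)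
    qed
    show False
    proof (cases "i < i'")
      case True then show ?thesis using gen ii by auto
    next
      case False then show ?thesis using gen[of i' i] ii by auto
    qed
  qed
  have "J ` {..<K} \<subseteq> {..<d}" using J by auto
  then have "card {..<K} \<le> card {..<d}" using inj by (metis card_image card_mono finite_lessThan)
  then have Kd: "K \<le> d" by simp
  have "m < (K+1)*p"
  proof -
    have "m = K*p + m mod p" by (simp add: K_def)
    moreover have "m mod p < p" using assms(1) by simp
    ultimately show ?thesis by simp
  qed
  moreover have "(K+1)*p \<le> (d+1)*p" using Kd by (intro mult_right_mono) simp_all
  ultimately have "m < (d+1)*p" by (rule less_le_trans)
  then have "m + 1 \<le> d*p + p" by simp
  then have "real m + 1 \<le> real d * real p + real p" by (metis of_nat_add of_nat_mult of_nat_le_iff of_nat_1)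
  then have "real m - real p \<le> real d * (real p + 2)" by (simp add: algebra_simps)
  then show ?thesis by (simp add: pos_divide_le_eq add_pos_pos)
qed

end
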